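(* Let $\mathcal H=\bigoplus_{n\ge0}\mathcal H_n$ be a connected graded Hopf algebra over a field $\mathbb K$ of characteristic zero, let $\alpha:\mathcal H_1\to\mathbb K$ be a nonzero linear map and let $q=q_\alpha$ be the associated inverse-factorial character. Then $q$ is multiplicative: $q(xy)=q(x)q(y)$ for all $x,y\in\mathcal H$. Moreover, write $q=\varepsilon+\varphi$ with $\varphi(\mathbf 1)=0$ and, for $h\in\mathbb K$, set $q^{*h}(x):=\sum_{p\ge0}\binom{h}{p}\varphi^{*p}(x)$ (a finite sum for each $x$). Then for every $h\in\mathbb K$, $q^{*h}$ is a character of $\mathcal H$ and $$q^{*h}(x)=h^{|x|}\,q(x)$$ for every homogeneous $x\in\mathcal H$.
   Context: A connected graded Hopf algebra is $\mathcal H=\bigoplus_{n\ge0}\mathcal H_n$ with $\mathcal H_0=\mathbb K\mathbf 1$, product and coproduct $\Delta$ respecting the grading; $|x|$ is the degree of a homogeneous $x$, $\varepsilon$ the counit. Sweedler notation: $\Delta(x)=\sum_{(x)}x_1\otimes x_2$; the reduced coproduct is $\Delta'(x)=\Delta(x)-x\otimes\mathbf 1-\mathbf 1\otimes x=\sum'_{(x)}x'\otimes x''$, where for homogeneous $x$ the $x',x''$ may be taken homogeneous of degrees $<|x|$ adding up to $|x|$. Convolution of linear forms: $(\phi*\psi)(x)=\sum_{(x)}\phi(x_1)\psi(x_2)$, with unit $\varepsilon$; $\varphi^{*0}=\varepsilon$. The inverse-factorial character $q_\alpha$ is the linear form on $\mathcal H$ determined by $q_\alpha(\mathbf 1)=1$,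 $q_\alpha|_{\mathcal H_1}=\alpha$, and for homogeneous $x$ with $|x|\ge2$: $q_\alpha(x)=\frac{1}{2^{|x|}-2}\sum'_{(x)}q_\alpha(x')q_\alpha(x'')$ (equivalently $q_\alpha*q_\alpha(x)=2^{|x|}q_\alpha(x)$ for all homogeneous $x$). *)

theory Defs
  imports Complex_Main
begin

text \<open>
  The coproduct is given by a representative list of pairs: cop x = [(a1,b1),...,(an,bn)]
  represents the tensor sum of ai (x) bi in H (x) H.  All axioms on tensors are stated by
  evaluating against products of K-linear functionals f (x) g (resp. f (x) g (x) k), which
  separate the points of tensor products of vector spaces, so they are equivalent to the
  usual identities in H (x) H (resp. H (x) H (x) H).
\<close>

definition lin_form :: "('k::field \<Rightarrow> 'h::ab_group_add \<Rightarrow> 'h) \<Rightarrow> ('h \<Rightarrow> 'k) \<Rightarrow> bool" where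
  "lin_form smult f \<longleftrightarrow> (\<forall>x y. f (x + y) = f x + f y) \<and> (\<forall>c x. f (smult c x) = c * f x)"

definition lin_map :: "('k::field \<Rightarrow> 'h::ab_group_add \<Rightarrow> 'h) \<Rightarrow> ('h \<Rightarrow> 'h) \<Rightarrow> bool" where
  "lin_map smult S \<longleftrightarrow> (\<forall>x y. S (x + y) = S x + S y) \<and> (\<forall>c x. S (smult c x) = smult c (S x))"

definition subspace_of :: "('k::field \<Rightarrow> 'h::ab_group_add \<Rightarrow> 'h) \<Rightarrow> 'h set \<Rightarrow> bool" where
  "subspace_of smult V \<longleftrightarrow> 0 \<in> V \<and> (\<forall>x\<in>V. \<forall>y\<in>V. x + y \<in> V) \<and> (\<forall>c. \<forall>x\<in>V. smult c x \<in> V)"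

definition tev :: "('h \<Rightarrow> 'k::field) \<Rightarrow> ('h \<Rightarrow> 'k) \<Rightarrow> ('h \<times> 'h) list \<Rightarrow> 'k" where
  "tev f g xs = sum_list (map (\<lambda>(a, b). f a * g b) xs)"

definition is_decomp :: "(nat \<Rightarrow> 'h::ab_group_add set) \<Rightarrow> 'h \<Rightarrow> (nat \<Rightarrow> 'h) \<Rightarrow> bool" where
  "is_decomp Hn x c \<longleftrightarrow> (\<forall>n. c n \<in> Hn n) \<and> finite {n. c n \<noteq> 0} \<and> x = (\<Sum>n\<in>{n. c n \<noteq> 0}. c n)"

definition direct_sum_decomp :: "(nat \<Rightarrow> 'h::ab_group_add set) \<Rightarrow> bool" where
  "direct_sum_decomp Hn \<longleftrightarrow> (\<forall>x. \<exists>!c. is_decomp Hn x c)"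

definition comp :: "(nat \<Rightarrow> 'h::ab_group_add set) \<Rightarrow> nat \<Rightarrow> 'h \<Rightarrow> 'h" where
  "comp Hn n x = (THE c. is_decomp Hn x c) n"

definition conn_graded_hopf ::
  "('k::field_char_0 \<Rightarrow> 'h::ab_group_add \<Rightarrow> 'h) \<Rightarrow> ('h \<Rightarrow> 'h \<Rightarrow> 'h) \<Rightarrow> 'h
   \<Rightarrow> ('h \<Rightarrow> ('h \<times> 'h) list) \<Rightarrow> ('h \<Rightarrow> 'k) \<Rightarrow> (nat \<Rightarrow> 'h set) \<Rightarrow> bool" where
  "conn_graded_hopf smult mult one cop eps Hn \<longleftrightarrow>
     \<comment> \<open>vector space over K\<close>
     vector_space smult \<and>
     \<comment> \<open>grading\<close>
     (\<forall>n. subspace_of smult (Hn n)) \<and> direct_sum_decomp Hn \<and>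
     \<comment> \<open>connectedness: H_0 = K 1\<close>
     Hn 0 = range (\<lambda>c. smult c one) \<and> one \<noteq> 0 \<and>
     \<comment> \<open>unital associative algebra, bilinear product\<close>
     (\<forall>x y z. mult (x + y) z = mult x z + mult y z) \<and>
     (\<forall>x y z. mult x (y + z) = mult x y + mult x z) \<and>
     (\<forall>c x y. mult (smult c x) y = smult c (mult x y)) \<and>
     (\<forall>c x y. mult x (smult c y) = smult c (mult x y)) \<and>
     (\<forall>x y z. mult (mult x y) z = mult x (mult y z)) \<and>
     (\<forall>x. mult one x = x \<and> mult x one = x) \<and>
     \<comment> \<open>product respects grading\<close>
     (\<forall>m n x y. x \<in> Hn m \<longrightarrow> y \<in> Hn n \<longrightarrow> mult x y \<in> Hn (m + n)) \<and>
     \<comment> \<open>coproduct is a linear map H \<rightarrow> H (x) H\<close>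
     (\<forall>f g. lin_form smult f \<longrightarrow> lin_form smult g \<longrightarrow>
        (\<forall>x y. tev f g (cop (x + y)) = tev f g (cop x) + tev f g (cop y)) \<and>
        (\<forall>c x. tev f g (cop (smult c x)) = c * tev f g (cop x))) \<and>
     \<comment> \<open>coassociativity\<close>
     (\<forall>f g k x. lin_form smult f \<longrightarrow> lin_form smult g \<longrightarrow> lin_form smult k \<longrightarrow>
        tev (\<lambda>a. tev f g (cop a)) k (cop x) = tev f (\<lambda>b. tev g k (cop b)) (cop x)) \<and>
     \<comment> \<open>counit\<close>
     lin_form smult eps \<and>
     (\<forall>f x. lin_form smult f \<longrightarrow> tev eps f (cop x) = f x \<and> tev f eps (cop x) = f x) \<and>
     \<comment> \<open>coproduct and counit are algebra morphisms\<close>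
     (\<forall>f g x y. lin_form smult f \<longrightarrow> lin_form smult g \<longrightarrow>
        tev f g (cop (mult x y)) =
          (\<Sum>(a, b)\<leftarrow>cop x. \<Sum>(c, d)\<leftarrow>cop y. f (mult a c) * g (mult b d))) \<and>
     (\<forall>f g. lin_form smult f \<longrightarrow> lin_form smult g \<longrightarrow> tev f g (cop one) = f one * g one) \<and>
     (\<forall>x y. eps (mult x y) = eps x * eps y) \<and> eps one = 1 \<and>
     \<comment> \<open>coproduct and counit respect the grading\<close>
     (\<forall>n x f g. x \<in> Hn n \<longrightarrow> lin_form smult f \<longrightarrow> lin_form smult g \<longrightarrow>
        tev f g (cop x) = (\<Sum>i\<le>n. tev (\<lambda>a. f (comp Hn i a)) (\<lambda>b. g (comp Hn (n - i) b)) (cop x))) \<and>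
     (\<forall>n x. 0 < n \<longrightarrow> x \<in> Hn n \<longrightarrow> eps x = 0) \<and>
     \<comment> \<open>antipode\<close>
     (\<exists>S. lin_map smult S \<and>
        (\<forall>f x. lin_form smult f \<longrightarrow>
           (\<Sum>(a, b)\<leftarrow>cop x. f (mult (S a) b)) = eps x * f one \<and>
           (\<Sum>(a, b)\<leftarrow>cop x. f (mult a (S b))) = eps x * f one))"

definition conv :: "('h \<Rightarrow> ('h \<times> 'h) list) \<Rightarrow> ('h \<Rightarrow> 'k::field) \<Rightarrow> ('h \<Rightarrow> 'k) \<Rightarrow> 'h \<Rightarrow> 'k" where
  "conv cop \<phi> \<psi> x = tev \<phi> \<psi> (cop x)"

primrec convpow :: "('h \<Rightarrow> ('h \<times> 'h) list) \<Rightarrow> ('h \<Rightarrow> 'k::field) \<Rightarrow> ('h \<Rightarrow> 'k) \<Rightarrow> nat \<Rightarrow> 'h \<Rightarrow> 'k" where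
  "convpow cop eps \<phi> 0 = eps"
| "convpow cop eps \<phi> (Suc p) = conv cop \<phi> (convpow cop eps \<phi> p)"

definition character :: "('k::field \<Rightarrow> 'h::ab_group_add \<Rightarrow> 'h) \<Rightarrow> ('h \<Rightarrow> 'h \<Rightarrow> 'h) \<Rightarrow> 'h \<Rightarrow> ('h \<Rightarrow> 'k) \<Rightarrow> bool" where
  "character smult mult one \<psi> \<longleftrightarrow> lin_form smult \<psi> \<and> \<psi> one = 1 \<and> (\<forall>x y. \<psi> (mult x y) = \<psi> x * \<psi> y)"

text \<open>Inverse-factorial character q_alpha, characterised by its defining properties
  (linear, q(1) = 1, q = alpha on H_1, and the recursion via the reduced coproduct;
  note sum' q(x')q(x'') = (q*q)(x) - q(x)q(1) - q(1)q(x)).\<close>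
definition inv_fact_char ::
  "('k::field_char_0 \<Rightarrow> 'h::ab_group_add \<Rightarrow> 'h) \<Rightarrow> 'h \<Rightarrow> ('h \<Rightarrow> ('h \<times> 'h) list)
   \<Rightarrow> (nat \<Rightarrow> 'h set) \<Rightarrow> ('h \<Rightarrow> 'k) \<Rightarrow> ('h \<Rightarrow> 'k) \<Rightarrow> bool" where
  "inv_fact_char smult one cop Hn \<alpha> q \<longleftrightarrow>
     lin_form smult q \<and> q one = 1 \<and> (\<forall>x\<in>Hn 1. q x = \<alpha> x) \<and>
     (\<forall>n x. 2 \<le> n \<longrightarrow> x \<in> Hn n \<longrightarrow>
        q x = (tev q q (cop x) - q x * q one - q one * q x) / (2 ^ n - 2))"

definition qpow :: "('h \<Rightarrow> ('h \<times> 'h) list) \<Rightarrow> ('h \<Rightarrow> 'k::field_char_0) \<Rightarrow> ('h \<Rightarrow> 'k) \<Rightarrow> 'k \<Rightarrow> 'h \<Rightarrow> 'k" where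
  "qpow cop eps q h x =
     (let \<phi> = (\<lambda>y. q y - eps y);
          t = (\<lambda>p. (h gchoose p) * convpow cop eps \<phi> p x)
      in \<Sum>p\<in>{p. t p \<noteq> 0}. t p)"

end

theory Submission
  imports Defs "HOL-Computational_Algebra.Computational_Algebra"
begin



lemma tev_Nil[simp]: "tev f g [] = 0" by (simp add: tev_def)
lemma tev_Cons[simp]: "tev f g (p # xs) = f (fst p) * g (snd p) + tev f g xs"
  by (cases p) (simp add: tev_def)

lemma tev_sumL: "tev (\<lambda>a. \<Sum>i\<in>I. f i a) g xs = (\<Sum>i\<in>I. tev (f i) g xs)"
  by (induction xs) (auto simp: sum.distrib sum_distrib_right)
lemma tev_sumR: "tev f (\<lambda>b. \<Sum>i\<in>I. g i b) xs = (\<Sum>i\<in>I. tev f (g i) xs)"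
  by (induction xs) (auto simp: sum.distrib sum_distrib_left)
lemma tev_scaleL: "tev (\<lambda>a. c * f a) g xs = c * tev f g xs"
  by (induction xs) (auto simp: algebra_simps)
lemma tev_scaleR: "tev f (\<lambda>b. c * g b) xs = c * tev f g xs"
  by (induction xs) (auto simp: algebra_simps)
lemma tev_zeroL: "tev (\<lambda>a. 0) g xs = 0"
  by (induction xs) auto
lemma tev_zeroR: "tev f (\<lambda>a. 0) xs = 0"
  by (induction xs) auto
lemma tev_diffL: "tev (\<lambda>a. f a - f' a) g xs = tev f g xs - tev f' g xs"
  by (induction xs) (auto simp: algebra_simps)
lemma tev_addL: "tev (\<lambda>a. f a + f' a) g xs = tev f g xs + tev f' g xs"
  by (induction xs) (auto simp: algebra_simps)

lemma sum_list_sum_swap: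
  "(\<Sum>p\<leftarrow>xs. \<Sum>j\<in>J. f j p) = (\<Sum>j\<in>J. \<Sum>p\<leftarrow>xs. f j p)"
  by (induction xs) (auto simp: sum.distrib)

lemma lin_form_zero: "lin_form sm f \<Longrightarrow> f 0 = 0"
proof -
  assume "lin_form sm f"
  then have "f (0 + 0) = f 0 + f 0" unfolding lin_form_def by blast
  then have "f 0 + f 0 = f 0 + 0" by simp
  then show ?thesis by (rule add_left_imp_eq)
qed

lemma lin_form_sum: "lin_form sm f \<Longrightarrow> f (sum g A) = (\<Sum>i\<in>A. f (g i))"
  by (induction A rule: infinite_finite_induct) (auto simp: lin_form_zero lin_form_def)

lemma lin_form_diff: "lin_form sm f \<Longrightarrow> lin_form sm g \<Longrightarrow> lin_form sm (\<lambda>x. f x - g x)"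
  unfolding lin_form_def by (auto simp: algebra_simps)
lemma lin_form_add: "lin_form sm f \<Longrightarrow> lin_form sm g \<Longrightarrow> lin_form sm (\<lambda>x. f x + g x)"
  unfolding lin_form_def by (auto simp: algebra_simps)
lemma lin_form_scale: "lin_form sm f \<Longrightarrow> lin_form sm (\<lambda>x. c * f x)"
  unfolding lin_form_def by (auto simp: algebra_simps)
lemma lin_form_mult: "lin_form sm f \<Longrightarrow> lin_form sm (\<lambda>x. f x * c)"
  unfolding lin_form_def by (auto simp: algebra_simps)
lemma lin_form_zerof: "lin_form sm (\<lambda>x. 0)"
  unfolding lin_form_def by auto
lemma lin_form_sumf: "(\<And>i. i \<in> I \<Longrightarrow> lin_form sm (f i)) \<Longrightarrow> lin_form sm (\<lambda>x. \<Sum>i\<in>I. f i x)"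
  by (induction I rule: infinite_finite_induct) (auto simp: lin_form_zerof lin_form_add)

locale cgh =
  fixes smult :: "'k::field_char_0 \<Rightarrow> 'h::ab_group_add \<Rightarrow> 'h"
    and mult :: "'h \<Rightarrow> 'h \<Rightarrow> 'h" and one :: 'h
    and cop :: "'h \<Rightarrow> ('h \<times> 'h) list" and eps :: "'h \<Rightarrow> 'k"
    and Hn :: "nat \<Rightarrow> 'h set"
  assumes H: "conn_graded_hopf smult mult one cop eps Hn"
begin

abbreviation "lf \<equiv> lin_form smult"
lemmas HD = H[unfolded conn_graded_hopf_def]

lemma vs: "vector_space smult" using HD[THEN conjunct1] by blast
interpretation V: vector_space smult by (rule vs)
lemma sub: "subspace_of smult (Hn n)" using HD[THEN conjunct2, THEN conjunct1] by blast
lemma ds: "direct_sum_decomp Hn" using HD[THEN conjunct2, THEN conjunct2, THEN conjunct1] by blast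
lemma H0: "Hn 0 = range (\<lambda>c. smult c one)" using HD[THEN conjunct2, THEN conjunct2, THEN conjunct2, THEN conjunct1] by blast
lemma mult_addL: "mult (x + y) z = mult x z + mult y z" using HD[THEN conjunct2, THEN conjunct2, THEN conjunct2, THEN conjunct2, THEN conjunct2, THEN conjunct1] by blast
lemma mult_addR: "mult x (y + z) = mult x y + mult x z" using HD[THEN conjunct2, THEN conjunct2, THEN conjunct2, THEN conjunct2, THEN conjunct2, THEN conjunct2, THEN conjunct1] by blast
lemma mult_smultL: "mult (smult c x) y = smult c (mult x y)" using HD[THEN conjunct2, THEN conjunct2, THEN conjunct2, THEN conjunct2, THEN conjunct2, THEN conjunct2, THEN conjunct2, THEN conjunct1] by blast
lemma mult_smultR: "mult x (smult c y) = smult c (mult x y)" using HD[THEN conjunct2, THEN conjunct2, THEN conjunct2, THEN conjunct2, THEN conjunct2, THEN conjunct2, THEN conjunct2, THEN conjunct2, THEN conjunct1] by blast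
lemma mult_oneL: "mult one x = x" using HD[THEN conjunct2, THEN conjunct2, THEN conjunct2, THEN conjunct2, THEN conjunct2, THEN conjunct2, THEN conjunct2, THEN conjunct2, THEN conjunct2, THEN conjunct2, THEN conjunct1] by blast
lemma mult_oneR: "mult x one = x" using HD[THEN conjunct2, THEN conjunct2, THEN conjunct2, THEN conjunct2, THEN conjunct2, THEN conjunct2, THEN conjunct2, THEN conjunct2, THEN conjunct2, THEN conjunct2, THEN conjunct1] by blast
lemma mult_grade: "x \<in> Hn m \<Longrightarrow> y \<in> Hn n \<Longrightarrow> mult x y \<in> Hn (m + n)"
  using HD[THEN conjunct2, THEN conjunct2, THEN conjunct2, THEN conjunct2, THEN conjunct2, THEN conjunct2, THEN conjunct2, THEN conjunct2, THEN conjunct2, THEN conjunct2, THEN conjunct2, THEN conjunct1] by blast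
lemma cop_add: "lf f \<Longrightarrow> lf g \<Longrightarrow> tev f g (cop (x + y)) = tev f g (cop x) + tev f g (cop y)"
  using HD[THEN conjunct2, THEN conjunct2, THEN conjunct2, THEN conjunct2, THEN conjunct2, THEN conjunct2, THEN conjunct2, THEN conjunct2, THEN conjunct2, THEN conjunct2, THEN conjunct2, THEN conjunct2, THEN conjunct1] by blast
lemma cop_smult: "lf f \<Longrightarrow> lf g \<Longrightarrow> tev f g (cop (smult c x)) = c * tev f g (cop x)"
  using HD[THEN conjunct2, THEN conjunct2, THEN conjunct2, THEN conjunct2, THEN conjunct2, THEN conjunct2, THEN conjunct2, THEN conjunct2, THEN conjunct2, THEN conjunct2, THEN conjunct2, THEN conjunct2, THEN conjunct1] by blast
lemma coassoc: "lf f \<Longrightarrow> lf g \<Longrightarrow> lf k \<Longrightarrow>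
        tev (\<lambda>a. tev f g (cop a)) k (cop x) = tev f (\<lambda>b. tev g k (cop b)) (cop x)"
  using HD[THEN conjunct2, THEN conjunct2, THEN conjunct2, THEN conjunct2, THEN conjunct2, THEN conjunct2, THEN conjunct2, THEN conjunct2, THEN conjunct2, THEN conjunct2, THEN conjunct2, THEN conjunct2, THEN conjunct2, THEN conjunct1] by blast
lemma eps_lf: "lf eps" using HD[THEN conjunct2, THEN conjunct2, THEN conjunct2, THEN conjunct2, THEN conjunct2, THEN conjunct2, THEN conjunct2, THEN conjunct2, THEN conjunct2, THEN conjunct2, THEN conjunct2, THEN conjunct2, THEN conjunct2, THEN conjunct2, THEN conjunct1] by blast
lemma counitL: "lf f \<Longrightarrow> tev eps f (cop x) = f x" using HD[THEN conjunct2, THEN conjunct2, THEN conjunct2, THEN conjunct2, THEN conjunct2, THEN conjunct2, THEN conjunct2, THEN conjunct2, THEN conjunct2, THEN conjunct2, THEN conjunct2, THEN conjunct2, THEN conjunct2, THEN conjunct2, THEN conjunct2, THEN conjunct1] by blast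
lemma counitR: "lf f \<Longrightarrow> tev f eps (cop x) = f x" using HD[THEN conjunct2, THEN conjunct2, THEN conjunct2, THEN conjunct2, THEN conjunct2, THEN conjunct2, THEN conjunct2, THEN conjunct2, THEN conjunct2, THEN conjunct2, THEN conjunct2, THEN conjunct2, THEN conjunct2, THEN conjunct2, THEN conjunct2, THEN conjunct1] by blast
lemma cop_mult: "lf f \<Longrightarrow> lf g \<Longrightarrow> tev f g (cop (mult x y)) =
          (\<Sum>(a, b)\<leftarrow>cop x. \<Sum>(c, d)\<leftarrow>cop y. f (mult a c) * g (mult b d))"
  using HD[THEN conjunct2, THEN conjunct2, THEN conjunct2, THEN conjunct2, THEN conjunct2, THEN conjunct2, THEN conjunct2, THEN conjunct2, THEN conjunct2, THEN conjunct2, THEN conjunct2, THEN conjunct2, THEN conjunct2, THEN conjunct2, THEN conjunct2, THEN conjunct2, THEN conjunct1] by blast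
lemma cop_one: "lf f \<Longrightarrow> lf g \<Longrightarrow> tev f g (cop one) = f one * g one"
  using HD[THEN conjunct2, THEN conjunct2, THEN conjunct2, THEN conjunct2, THEN conjunct2, THEN conjunct2, THEN conjunct2, THEN conjunct2, THEN conjunct2, THEN conjunct2, THEN conjunct2, THEN conjunct2, THEN conjunct2, THEN conjunct2, THEN conjunct2, THEN conjunct2, THEN conjunct2, THEN conjunct1] by blast
lemma eps_one: "eps one = 1" using HD[THEN conjunct2, THEN conjunct2, THEN conjunct2, THEN conjunct2, THEN conjunct2, THEN conjunct2, THEN conjunct2, THEN conjunct2, THEN conjunct2, THEN conjunct2, THEN conjunct2, THEN conjunct2, THEN conjunct2, THEN conjunct2, THEN conjunct2, THEN conjunct2, THEN conjunct2, THEN conjunct2, THEN conjunct2, THEN conjunct1] by blast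
lemma cop_grade: "x \<in> Hn n \<Longrightarrow> lf f \<Longrightarrow> lf g \<Longrightarrow>
        tev f g (cop x) = (\<Sum>i\<le>n. tev (\<lambda>a. f (comp Hn i a)) (\<lambda>b. g (comp Hn (n - i) b)) (cop x))"
  using HD[THEN conjunct2, THEN conjunct2, THEN conjunct2, THEN conjunct2, THEN conjunct2, THEN conjunct2, THEN conjunct2, THEN conjunct2, THEN conjunct2, THEN conjunct2, THEN conjunct2, THEN conjunct2, THEN conjunct2, THEN conjunct2, THEN conjunct2, THEN conjunct2, THEN conjunct2, THEN conjunct2, THEN conjunct2, THEN conjunct2, THEN conjunct1] by blast
lemma eps_grade: "0 < n \<Longrightarrow> x \<in> Hn n \<Longrightarrow> eps x = 0" using HD[THEN conjunct2, THEN conjunct2, THEN conjunct2, THEN conjunct2, THEN conjunct2, THEN conjunct2, THEN conjunct2, THEN conjunct2, THEN conjunct2, THEN conjunct2, THEN conjunct2, THEN conjunct2, THEN conjunct2, THEN conjunct2, THEN conjunct2, THEN conjunct2, THEN conjunct2, THEN conjunct2, THEN conjunct2, THEN conjunct2, THEN conjunct2, THEN conjunct1] by blast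

lemma smult_zero: "smult c 0 = 0" by (rule V.scale_zero_right)
lemma smult_sum: "smult c (sum f A) = (\<Sum>i\<in>A. smult c (f i))" by (rule V.scale_sum_right)
lemma smult_one: "smult 1 x = x" by (rule V.scale_one)
lemma zero_in: "0 \<in> Hn n" using sub[of n] by (simp add: subspace_of_def)
lemma add_in: "x \<in> Hn n \<Longrightarrow> y \<in> Hn n \<Longrightarrow> x + y \<in> Hn n" using sub[of n] by (simp add: subspace_of_def)
lemma smult_in: "x \<in> Hn n \<Longrightarrow> smult c x \<in> Hn n" using sub[of n] by (simp add: subspace_of_def)
lemma one_in: "one \<in> Hn 0" using H0 smult_one by (metis rangeI)

lemma decomp_intro:
  assumes "\<And>n. c n \<in> Hn n" "\<And>n. n \<ge> N \<Longrightarrow> c n = 0" "x = (\<Sum>n<N. c n)"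
  shows "is_decomp Hn x c"
proof -
  have S: "{n. c n \<noteq> 0} \<subseteq> {..<N}" using assms(2) by (auto simp: not_less[symmetric])
  have "(\<Sum>n<N. c n) = (\<Sum>n\<in>{n. c n \<noteq> 0}. c n)"
    by (rule sum.mono_neutral_right) (use S in auto)
  moreover have "finite {n. c n \<noteq> 0}" using S finite_subset by blast
  ultimately show ?thesis unfolding is_decomp_def using assms by auto
qed

lemma comp_decomp: "is_decomp Hn x (\<lambda>n. comp Hn n x)"
proof -
  have "\<exists>!c. is_decomp Hn x c" using ds by (simp add: direct_sum_decomp_def)
  from theI'[OF this] show ?thesis unfolding comp_def by simp
qed

lemma comp_unique: "is_decomp Hn x c \<Longrightarrow> comp Hn n x = c n"
proof -
  assume a: "is_decomp Hn x c"
  have "\<exists>!c. is_decomp Hn x c" using ds by (simp add: direct_sum_decomp_def)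
  then have "(\<lambda>n. comp Hn n x) = c" using a comp_decomp by blast
  then show ?thesis by (simp add: fun_eq_iff)
qed

lemma comp_in: "comp Hn n x \<in> Hn n" using comp_decomp[of x] by (simp add: is_decomp_def)

lemma comp_bound: "\<exists>N. \<forall>n\<ge>N. comp Hn n x = 0"
proof -
  have "finite {n. comp Hn n x \<noteq> 0}" using comp_decomp[of x] by (simp add: is_decomp_def)
  then obtain N where "{n. comp Hn n x \<noteq> 0} \<subseteq> {..<N}"
    using finite_nat_bounded by blast
  then have "\<forall>n\<ge>N. comp Hn n x = 0" by auto
  then show ?thesis by blast
qed

lemma comp_sum: assumes "\<forall>n\<ge>N. comp Hn n x = 0" shows "x = (\<Sum>n<N. comp Hn n x)"
proof -
  have S: "{n. comp Hn n x \<noteq> 0} \<subseteq> {..<N}" using assms by (auto simp: not_less[symmetric])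
  have "(\<Sum>n<N. comp Hn n x) = (\<Sum>n\<in>{n. comp Hn n x \<noteq> 0}. comp Hn n x)"
    by (rule sum.mono_neutral_right) (use S in auto)
  then show ?thesis using comp_decomp[of x] by (simp add: is_decomp_def)
qed

lemma comp_hom: assumes "x \<in> Hn k" shows "comp Hn n x = (if n = k then x else 0)"
proof -
  have "is_decomp Hn x (\<lambda>n. if n = k then x else 0)"
    by (rule decomp_intro[where N="Suc k"]) (use assms zero_in in auto)
  then show ?thesis by (rule comp_unique)
qed

lemma comp_add: "comp Hn n (x + y) = comp Hn n x + comp Hn n y"
proof -
  obtain N1 where N1: "\<forall>n\<ge>N1. comp Hn n x = 0" using comp_bound by blast
  obtain N2 where N2: "\<forall>n\<ge>N2. comp Hn n y = 0" using comp_bound by blast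
  let ?N = "max N1 N2"
  have "is_decomp Hn (x + y) (\<lambda>n. comp Hn n x + comp Hn n y)"
  proof (rule decomp_intro[where N="?N"])
    show "x + y = (\<Sum>n<?N. comp Hn n x + comp Hn n y)"
      using comp_sum[of ?N x] comp_sum[of ?N y] N1 N2 by (simp add: sum.distrib)
  qed (use N1 N2 comp_in add_in in auto)
  then show ?thesis by (rule comp_unique)
qed

lemma comp_smult: "comp Hn n (smult c x) = smult c (comp Hn n x)"
proof -
  obtain N1 where N1: "\<forall>n\<ge>N1. comp Hn n x = 0" using comp_bound by blast
  have "is_decomp Hn (smult c x) (\<lambda>n. smult c (comp Hn n x))"
  proof (rule decomp_intro[where N="N1"])
    show "smult c x = (\<Sum>n<N1. smult c (comp Hn n x))"
      using comp_sum[of N1 x] N1 by (metis smult_sum)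
  qed (use N1 comp_in smult_in smult_zero in auto)
  then show ?thesis by (rule comp_unique)
qed

lemma lf_comp: "lf f \<Longrightarrow> lf (\<lambda>a. f (comp Hn n a))"
  unfolding lin_form_def by (auto simp: comp_add comp_smult)

lemma lf_decomp: assumes "lf f" "\<forall>n\<ge>N. comp Hn n x = 0" shows "f x = (\<Sum>n<N. f (comp Hn n x))"
proof -
  have "f x = f (\<Sum>n<N. comp Hn n x)" using comp_sum[OF assms(2)] by (rule arg_cong)
  then show ?thesis using lin_form_sum[OF assms(1)] by simp
qed

lemma H0_elem: "x \<in> Hn 0 \<Longrightarrow> \<exists>c. x = smult c one" using H0 by auto

lemma lf_H0: assumes "lf f" "x \<in> Hn 0" shows "f x = eps x * f one"
proof -
  obtain c where c: "x = smult c one" using H0_elem assms(2) by blast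
  have "f x = c * f one" using assms(1) c unfolding lin_form_def by simp
  moreover have "eps x = c" using eps_lf c eps_one unfolding lin_form_def by simp
  ultimately show ?thesis by simp
qed

lemma eps_comp0: "eps (comp Hn 0 x) = eps x"
proof -
  obtain N where N: "\<forall>n\<ge>N. comp Hn n x = 0" using comp_bound by blast
  then have N': "\<forall>n\<ge>Suc N. comp Hn n x = 0" by auto
  have "eps x = (\<Sum>n<Suc N. eps (comp Hn n x))" using lf_decomp[OF eps_lf N'] .
  also have "\<dots> = eps (comp Hn 0 x)"
    by (subst sum.lessThan_Suc_shift) (auto intro!: sum.neutral eps_grade comp_in)
  finally show ?thesis by simp
qed

lemma lf_comp0: "lf f \<Longrightarrow> f (comp Hn 0 x) = eps x * f one"
  using lf_H0[OF _ comp_in] eps_comp0 by simp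

lemma lf_0: "lf f \<Longrightarrow> lf g \<Longrightarrow> lf (\<lambda>x. tev f g (cop x))"
  unfolding lin_form_def using cop_add cop_smult lin_form_def by blast

lemma mult_0L: "mult 0 y = 0"
proof - have "mult (0+0) y = mult 0 y + mult 0 y" by (rule mult_addL) then show ?thesis by simp qed
lemma mult_0R: "mult y 0 = 0"
proof - have "mult y (0+0) = mult y 0 + mult y 0" by (rule mult_addR) then show ?thesis by simp qed
lemma mult_sumL: "mult (sum g A) y = (\<Sum>i\<in>A. mult (g i) y)"
  by (induction A rule: infinite_finite_induct) (auto simp: mult_0L mult_addL)
lemma mult_sumR: "mult y (sum g A) = (\<Sum>i\<in>A. mult y (g i))"
  by (induction A rule: infinite_finite_induct) (auto simp: mult_0R mult_addR)

lemma lf_multL: "lf f \<Longrightarrow> lf (\<lambda>a. f (mult a c))"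
  unfolding lin_form_def by (auto simp: mult_addL mult_smultL)
lemma lf_multR: "lf f \<Longrightarrow> lf (\<lambda>a. f (mult c a))"
  unfolding lin_form_def by (auto simp: mult_addR mult_smultR)

lemma mult_ext:
  assumes f: "lf f" and hom: "\<And>m n x y. x \<in> Hn m \<Longrightarrow> y \<in> Hn n \<Longrightarrow> f (mult x y) = f x * f y"
  shows "f (mult x y) = f x * f y"
proof -
  obtain N1 where N1: "\<forall>n\<ge>N1. comp Hn n x = 0" using comp_bound by blast
  obtain N2 where N2: "\<forall>n\<ge>N2. comp Hn n y = 0" using comp_bound by blast
  have x: "x = (\<Sum>i<N1. comp Hn i x)" using comp_sum N1 by blast
  have y: "y = (\<Sum>j<N2. comp Hn j y)" using comp_sum N2 by blast
  have "f (mult x y) = f (\<Sum>i<N1. \<Sum>j<N2. mult (comp Hn i x) (comp Hn j y))"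
    by (subst x, subst y) (simp add: mult_sumL mult_sumR sum.swap[of _ "{..<N2}"])
  also have "\<dots> = (\<Sum>i<N1. \<Sum>j<N2. f (comp Hn i x) * f (comp Hn j y))"
    unfolding lin_form_sum[OF f] by (intro sum.cong refl hom[OF comp_in comp_in])
  also have "\<dots> = f x * f y"
    by (simp add: lf_decomp[OF f N1] lf_decomp[OF f N2] sum_product)
  finally show ?thesis .
qed

end



definition bsum :: "('a \<Rightarrow> 'b \<Rightarrow> 'c::comm_monoid_add) \<Rightarrow> ('a \<times> 'b) list \<Rightarrow> 'c" where
  "bsum F xs = sum_list (map (\<lambda>p. F (fst p) (snd p)) xs)"

lemma bsum_Nil[simp]: "bsum F [] = 0" by (simp add: bsum_def)
lemma bsum_Cons[simp]: "bsum F (p # xs) = F (fst p) (snd p) + bsum F xs" by (simp add: bsum_def)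

lemma bsum_case: "(\<Sum>(a, b)\<leftarrow>xs. F a b) = bsum F xs"
  by (induction xs) auto
lemma tev_bsum: "tev f g xs = bsum (\<lambda>a b. f a * g b) xs"
  by (induction xs) auto
lemma bsum_sum: "bsum (\<lambda>a b. \<Sum>j\<in>J. F j a b) xs = (\<Sum>j\<in>J. bsum (F j) xs)"
  by (induction xs) (auto simp: sum.distrib)
lemma bsum_swap: "bsum (\<lambda>a b. bsum (F a b) ys) xs = bsum (\<lambda>c d. bsum (\<lambda>a b. F a b c d) xs) ys"
proof (induction xs)
  case Nil then show ?case by (induction ys) auto
next
  case (Cons p xs)
  have "bsum (\<lambda>c d. bsum (\<lambda>a b. F a b c d) (p # xs)) ys =
        bsum (F (fst p) (snd p)) ys + bsum (\<lambda>c d. bsum (\<lambda>a b. F a b c d) xs) ys"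
    by (induction ys) (auto simp: algebra_simps)
  then show ?case using Cons by simp
qed
lemma bsum_cong: assumes "\<And>a b. F a b = G a b" shows "bsum F xs = bsum G xs"
  using assms by (induction xs) auto
lemma bsum_add: "bsum (\<lambda>a b. F a b + G a b) xs = bsum F xs + bsum G xs"
  by (induction xs) (auto simp: algebra_simps)
lemma bsum_multL: "bsum (\<lambda>a b. c * F a b) xs = (c::'a::comm_ring) * bsum F xs"
  by (induction xs) (auto simp: algebra_simps)
lemma bsum_prod: "bsum (\<lambda>a b. bsum (\<lambda>c d. P a b * Q c d) ys) xs = bsum P xs * (bsum Q ys :: 'a::comm_ring)"
proof -
  have "bsum (\<lambda>a b. bsum (\<lambda>c d. P a b * Q c d) ys) xs = bsum (\<lambda>a b. P a b * bsum Q ys) xs"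
    by (rule bsum_cong) (rule bsum_multL)
  also have "\<dots> = bsum Q ys * bsum P xs"
    using bsum_multL[of "bsum Q ys" P xs] by (simp add: mult.commute)
  finally show ?thesis by (simp add: mult.commute)
qed

context cgh begin

lemma double_grade:
  assumes x: "x \<in> Hn m" and y: "y \<in> Hn n" and f: "lf f" and g: "lf g"
  shows "bsum (\<lambda>a b. bsum (\<lambda>c d. f (mult a c) * g (mult b d)) (cop y)) (cop x) =
    (\<Sum>i\<le>m. \<Sum>j\<le>n. bsum (\<lambda>a b. bsum (\<lambda>c d. f (mult (comp Hn i a) (comp Hn j c)) *
         g (mult (comp Hn (m - i) b) (comp Hn (n - j) d))) (cop y)) (cop x))"
proof -
  have "bsum (\<lambda>a b. bsum (\<lambda>c d. f (mult a c) * g (mult b d)) (cop y)) (cop x)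
     = bsum (\<lambda>a b. tev (\<lambda>c. f (mult a c)) (\<lambda>d. g (mult b d)) (cop y)) (cop x)"
    by (simp add: tev_bsum)
  also have "\<dots> = bsum (\<lambda>a b. \<Sum>j\<le>n. tev (\<lambda>c. f (mult a (comp Hn j c))) (\<lambda>d. g (mult b (comp Hn (n - j) d))) (cop y)) (cop x)"
    by (rule bsum_cong) (rule cop_grade[OF y lf_multR[OF f] lf_multR[OF g]])
  also have "\<dots> = (\<Sum>j\<le>n. bsum (\<lambda>a b. tev (\<lambda>c. f (mult a (comp Hn j c))) (\<lambda>d. g (mult b (comp Hn (n - j) d))) (cop y)) (cop x))"
    by (rule bsum_sum)
  also have "\<dots> = (\<Sum>j\<le>n. bsum (\<lambda>c d. tev (\<lambda>a. f (mult a (comp Hn j c))) (\<lambda>b. g (mult b (comp Hn (n - j) d))) (cop x)) (cop y))"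
    by (simp add: tev_bsum bsum_swap[of _ "cop y"])
  also have "\<dots> = (\<Sum>j\<le>n. bsum (\<lambda>c d. \<Sum>i\<le>m. tev (\<lambda>a. f (mult (comp Hn i a) (comp Hn j c))) (\<lambda>b. g (mult (comp Hn (m - i) b) (comp Hn (n - j) d))) (cop x)) (cop y))"
    by (intro sum.cong refl bsum_cong cop_grade[OF x lf_multL[OF f] lf_multL[OF g]])
  also have "\<dots> = (\<Sum>j\<le>n. \<Sum>i\<le>m. bsum (\<lambda>c d. tev (\<lambda>a. f (mult (comp Hn i a) (comp Hn j c))) (\<lambda>b. g (mult (comp Hn (m - i) b) (comp Hn (n - j) d))) (cop x)) (cop y))"
    by (simp add: bsum_sum)
  also have "\<dots> = (\<Sum>j\<le>n. \<Sum>i\<le>m. bsum (\<lambda>a b. bsum (\<lambda>c d. f (mult (comp Hn i a) (comp Hn j c)) *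
         g (mult (comp Hn (m - i) b) (comp Hn (n - j) d))) (cop y)) (cop x))"
    by (simp add: tev_bsum bsum_swap[of _ "cop x"])
  also have "\<dots> = (\<Sum>i\<le>m. \<Sum>j\<le>n. bsum (\<lambda>a b. bsum (\<lambda>c d. f (mult (comp Hn i a) (comp Hn j c)) *
         g (mult (comp Hn (m - i) b) (comp Hn (n - j) d))) (cop y)) (cop x))"
    by (rule sum.swap)
  finally show ?thesis .
qed

end



lemma two_pow_ne: "2 \<le> n \<Longrightarrow> (2::'k::field_char_0) ^ n - 2 \<noteq> 0"
proof
  assume n: "2 \<le> n" and e: "(2::'k) ^ n - 2 = 0"
  have "(2::nat) ^ n \<ge> 2 ^ 2" using n by (rule power_increasing) auto
  then have "(2::nat) ^ n \<noteq> 2" by auto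
  moreover have "of_nat ((2::nat) ^ n) = (of_nat 2 :: 'k)" using e by simp
  ultimately show False using of_nat_eq_iff by blast
qed

locale cghq = cgh smult mult one cop eps Hn
  for smult :: "'k::field_char_0 \<Rightarrow> 'h::ab_group_add \<Rightarrow> 'h"
    and mult :: "'h \<Rightarrow> 'h \<Rightarrow> 'h" and one :: 'h
    and cop :: "'h \<Rightarrow> ('h \<times> 'h) list" and eps :: "'h \<Rightarrow> 'k"
    and Hn :: "nat \<Rightarrow> 'h set" +
  fixes \<alpha> q :: "'h \<Rightarrow> 'k"
  assumes Q: "inv_fact_char smult one cop Hn \<alpha> q"
begin

lemma q_lf: "lf q" using Q by (simp add: inv_fact_char_def)
lemma q_one: "q one = 1" using Q by (simp add: inv_fact_char_def)
lemma q_rec: "2 \<le> n \<Longrightarrow> x \<in> Hn n \<Longrightarrow> q x = (tev q q (cop x) - q x * q one - q one * q x) / (2 ^ n - 2)"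
  using Q unfolding inv_fact_char_def by blast

lemma q_comp0: "q (comp Hn 0 a) = eps a" using lf_comp0[OF q_lf] q_one by simp
lemma q_comp0f: "(\<lambda>a. q (comp Hn 0 a)) = eps" using q_comp0 by (simp add: fun_eq_iff)

lemma QQ: assumes x: "x \<in> Hn n" shows "tev q q (cop x) = 2 ^ n * q x"
proof -
  consider "n = 0" | "n = 1" | "2 \<le> n" by linarith
  then show ?thesis
  proof cases
    case 1
    then obtain c where c: "x = smult c one" using H0_elem x by blast
    have "tev q q (cop x) = c * (q one * q one)" using c cop_smult[OF q_lf q_lf] cop_one[OF q_lf q_lf] by simp
    moreover have "q x = c * q one" using c q_lf by (simp add: lin_form_def)
    ultimately show ?thesis using 1 q_one by simp
  next
    case 2
    have "tev q q (cop x) = (\<Sum>i\<le>1. tev (\<lambda>a. q (comp Hn i a)) (\<lambda>b. q (comp Hn (1 - i) b)) (cop x))"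
      using cop_grade[OF x q_lf q_lf] 2 by simp
    also have "\<dots> = tev eps (\<lambda>b. q (comp Hn 1 b)) (cop x) + tev (\<lambda>b. q (comp Hn 1 b)) eps (cop x)"
      by (simp add: q_comp0f)
    also have "\<dots> = 2 * q x"
      using counitL[OF lf_comp[OF q_lf]] counitR[OF lf_comp[OF q_lf]] comp_hom[OF x] 2 by simp
    finally show ?thesis using 2 by simp
  next
    case 3
    have ne: "(2::'k) ^ n - 2 \<noteq> 0" using two_pow_ne 3 by blast
    have "q x * (2 ^ n - 2) = tev q q (cop x) - 2 * q x"
      using q_rec[OF 3 x] ne q_one by (simp add: field_simps)
    then show ?thesis by (simp add: algebra_simps)
  qed
qed

end



lemma delta2: "a \<le> (m::nat) \<Longrightarrow> b \<le> n \<Longrightarrow>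
  (\<Sum>i\<le>m. \<Sum>j\<le>(n::nat). if i = a then if j = b then D else 0 else 0) = (D::'a::comm_monoid_add)"
proof -
  assume "a \<le> m" "b \<le> n"
  have "\<And>i. (\<Sum>j\<le>n. if i = a then if j = b then D else 0 else 0) = (if i = a then D else 0)"
    using \<open>b \<le> n\<close> by simp
  then have "(\<Sum>i\<le>m. \<Sum>j\<le>(n::nat). if i = a then if j = b then D else 0 else 0) = (\<Sum>i\<le>m. if i = a then D else 0)"
    by (intro sum.cong) auto
  also have "\<dots> = D" using \<open>a \<le> m\<close> by (subst sum.delta) auto
  finally show ?thesis .
qed

context cghq begin

lemma lfD1: "lf (\<lambda>c. q (mult a (comp Hn n c)) - q a * q (comp Hn n c))"
  by (rule lf_comp) (rule lin_form_diff[OF lf_multR[OF q_lf] lin_form_scale[OF q_lf]])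
lemma lfD2: "lf (\<lambda>a. q (mult (comp Hn m a) y) - q (comp Hn m a) * q y)"
  by (rule lf_comp) (rule lin_form_diff[OF lf_multL[OF q_lf] lin_form_mult[OF q_lf]])

lemma q_mult_hom_aux:
  "m + n = N \<Longrightarrow> x \<in> Hn m \<Longrightarrow> y \<in> Hn n \<Longrightarrow> q (mult x y) = q x * q y"
proof (induction N arbitrary: m n x y rule: less_induct)
  case (less N)
  note x = less.prems(2) and y = less.prems(3)
  consider "m = 0" | "n = 0" | "1 \<le> m" "1 \<le> n" by linarith
  then show ?case
  proof cases
    case 1
    then obtain c where c: "x = smult c one" using H0_elem x by blast
    have "mult x y = smult c y" using c mult_smultL mult_oneL by simp
    then show ?thesis using c q_lf q_one by (simp add: lin_form_def)
  next
    case 2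
    then obtain c where c: "y = smult c one" using H0_elem y by blast
    have "mult x y = smult c x" using c mult_smultR mult_oneR by simp
    then show ?thesis using c q_lf q_one by (simp add: lin_form_def)
  next
    case 3
    have N: "N = m + n" using less.prems by simp
    have IH: "\<And>i j a c. i + j < N \<Longrightarrow> q (mult (comp Hn i a) (comp Hn j c)) = q (comp Hn i a) * q (comp Hn j c)"
      using less.IH comp_in by blast
    define D where "D = q (mult x y) - q x * q y"
    define A where "A i = tev (\<lambda>a. q (comp Hn i a)) (\<lambda>b. q (comp Hn (m - i) b)) (cop x)" for i
    define B where "B j = tev (\<lambda>a. q (comp Hn j a)) (\<lambda>b. q (comp Hn (n - j) b)) (cop y)" for j
    define T where "T i j = bsum (\<lambda>a b. bsum (\<lambda>c d. q (mult (comp Hn i a) (comp Hn j c)) *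
         q (mult (comp Hn (m - i) b) (comp Hn (n - j) d))) (cop y)) (cop x)" for i j
    have S: "tev q q (cop (mult x y)) = (\<Sum>i\<le>m. \<Sum>j\<le>n. T i j)"
      unfolding T_def using cop_mult[OF q_lf q_lf, of x y] double_grade[OF x y q_lf q_lf]
      by (simp add: bsum_case)
    have Tgen: "T i j = A i * B j" if ij: "i \<le> m" "j \<le> n" "\<not> (i = 0 \<and> j = 0)" "\<not> (i = m \<and> j = n)" for i j
    proof -
      have l1: "i + j < N" using ij N by auto
      have l2: "(m - i) + (n - j) < N" using ij N 3 by auto
      have "T i j = bsum (\<lambda>a b. bsum (\<lambda>c d. (q (comp Hn i a) * q (comp Hn (m - i) b)) *
         (q (comp Hn j c) * q (comp Hn (n - j) d))) (cop y)) (cop x)"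
        unfolding T_def by (intro bsum_cong) (simp add: IH[OF l1] IH[OF l2] algebra_simps)
      also have "\<dots> = A i * B j" unfolding A_def B_def tev_bsum by (rule bsum_prod)
      finally show ?thesis .
    qed
    have Tmn: "T m n = A m * B n + D"
    proof -
      have z: "0 + 0 < N" using N 3 by simp
      have "T m n = bsum (\<lambda>a b. bsum (\<lambda>c d. (q (comp Hn m a) * eps b) * (q (comp Hn n c) * eps d)) (cop y)) (cop x)
          + bsum (\<lambda>a b. eps b * bsum (\<lambda>c d. (q (mult (comp Hn m a) (comp Hn n c)) - q (comp Hn m a) * q (comp Hn n c)) * eps d) (cop y)) (cop x)"
        unfolding T_def by (simp add: IH[OF z] q_comp0 bsum_add[symmetric] bsum_multL[symmetric] algebra_simps)
      also have "bsum (\<lambda>a b. bsum (\<lambda>c d. (q (comp Hn m a) * eps b) * (q (comp Hn n c) * eps d)) (cop y)) (cop x) = A m * B n"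
        unfolding A_def B_def tev_bsum by (simp add: bsum_prod q_comp0)
      also have "bsum (\<lambda>a b. eps b * bsum (\<lambda>c d. (q (mult (comp Hn m a) (comp Hn n c)) - q (comp Hn m a) * q (comp Hn n c)) * eps d) (cop y)) (cop x)
         = bsum (\<lambda>a b. eps b * (q (mult (comp Hn m a) y) - q (comp Hn m a) * q y)) (cop x)"
        using counitR[OF lfD1] comp_hom[OF y] by (simp add: tev_bsum)
      also have "\<dots> = D"
        using counitR[OF lfD2[where y=y and m=m], of x] comp_hom[OF x] by (simp add: tev_bsum D_def mult.commute)
      finally show ?thesis .
    qed
    have T00: "T 0 0 = A 0 * B 0 + D"
    proof -
      have z: "0 + 0 < N" using N 3 by simp
      have "T 0 0 = bsum (\<lambda>a b. bsum (\<lambda>c d. (eps a * q (comp Hn m b)) * (eps c * q (comp Hn n d))) (cop y)) (cop x)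
          + bsum (\<lambda>a b. eps a * bsum (\<lambda>c d. eps c * (q (mult (comp Hn m b) (comp Hn n d)) - q (comp Hn m b) * q (comp Hn n d))) (cop y)) (cop x)"
        unfolding T_def by (simp add: IH[OF z] q_comp0 bsum_add[symmetric] bsum_multL[symmetric] algebra_simps)
      also have "bsum (\<lambda>a b. bsum (\<lambda>c d. (eps a * q (comp Hn m b)) * (eps c * q (comp Hn n d))) (cop y)) (cop x) = A 0 * B 0"
        unfolding A_def B_def tev_bsum by (simp add: bsum_prod q_comp0)
      also have "bsum (\<lambda>a b. eps a * bsum (\<lambda>c d. eps c * (q (mult (comp Hn m b) (comp Hn n d)) - q (comp Hn m b) * q (comp Hn n d))) (cop y)) (cop x)
         = bsum (\<lambda>a b. eps a * (q (mult (comp Hn m b) y) - q (comp Hn m b) * q y)) (cop x)"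
        using counitL[OF lfD1] comp_hom[OF y] by (simp add: tev_bsum)
      also have "\<dots> = D"
        using counitL[OF lfD2[where y=y and m=m], of x] comp_hom[OF x] by (simp add: tev_bsum D_def)
      finally show ?thesis .
    qed
    have Tall: "T i j = A i * B j + ((if i = m then if j = n then D else 0 else 0) + (if i = 0 then if j = 0 then D else 0 else 0))"
      if "i \<le> m" "j \<le> n" for i j
      using Tgen[OF that] Tmn T00 3 by (cases "i = m \<and> j = n"; cases "i = 0 \<and> j = 0") auto
    have "(\<Sum>i\<le>m. \<Sum>j\<le>n. T i j) = (\<Sum>i\<le>m. \<Sum>j\<le>n. A i * B j) + 2 * D"
      using 3 by (simp add: Tall sum.distrib delta2)
    also have "(\<Sum>i\<le>m. \<Sum>j\<le>n. A i * B j) = tev q q (cop x) * tev q q (cop y)"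
      unfolding A_def B_def cop_grade[OF x q_lf q_lf] cop_grade[OF y q_lf q_lf] by (simp add: sum_product)
    finally have E: "tev q q (cop (mult x y)) = tev q q (cop x) * tev q q (cop y) + 2 * D" using S by simp
    have "2 ^ (m + n) * q (mult x y) = 2 ^ m * q x * (2 ^ n * q y) + 2 * D"
      using E QQ[OF mult_grade[OF x y]] QQ[OF x] QQ[OF y] by simp
    then have "(2 ^ (m + n) - 2) * D = 0" unfolding D_def by (simp add: algebra_simps power_add)
    moreover have "(2::'k) ^ (m + n) - 2 \<noteq> 0" using two_pow_ne[where 'k='k, of "m+n"] 3 by simp
    ultimately have "D = 0" by simp
    then show ?thesis unfolding D_def by simp
  qed
qed

lemma q_mult: "q (mult x y) = q x * q y"
  by (rule mult_ext[OF q_lf]) (rule q_mult_hom_aux[OF refl])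

end



context cghq begin

abbreviation phi where "phi \<equiv> (\<lambda>y. q y - eps y)"
abbreviation P where "P \<equiv> convpow cop eps phi"
abbreviation F where "F \<equiv> qpow cop eps q"

lemma phi_lf: "lf phi" by (rule lin_form_diff[OF q_lf eps_lf])
lemma conv_eq: "conv cop f g = (\<lambda>x. tev f g (cop x))" by (simp add: conv_def fun_eq_iff)

lemma P_lf: "lf (P p)"
  by (induction p) (simp_all add: eps_lf conv_eq lf_0 phi_lf)

lemma P_Suc: "P (Suc p) x = tev phi (P p) (cop x)" by (simp add: conv_def)

lemma phi_comp0: "phi (comp Hn 0 a) = 0" using q_comp0 eps_comp0 by simp

lemma P_van: "x \<in> Hn n \<Longrightarrow> n < p \<Longrightarrow> P p x = 0"
proof (induction p arbitrary: n x)
  case 0 then show ?case by simp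
next
  case (Suc p)
  have "P (Suc p) x = (\<Sum>i\<le>n. tev (\<lambda>a. phi (comp Hn i a)) (\<lambda>b. P p (comp Hn (n - i) b)) (cop x))"
    unfolding P_Suc by (rule cop_grade[OF Suc.prems(1) phi_lf P_lf])
  also have "\<dots> = 0"
  proof (intro sum.neutral ballI)
    fix i assume i: "i \<in> {..n}"
    show "tev (\<lambda>a. phi (comp Hn i a)) (\<lambda>b. P p (comp Hn (n - i) b)) (cop x) = 0"
    proof (cases "i = 0")
      case True then show ?thesis using phi_comp0 tev_zeroL[of "P p \<circ> (\<lambda>b. comp Hn (n - i) b)"] by (simp add: o_def)
    next
      case False
      then have "n - i < p" using i Suc.prems(2) by auto
      then have "\<And>b. P p (comp Hn (n - i) b) = 0" using Suc.IH comp_in by blast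
      then show ?thesis by (simp add: tev_zeroR)
    qed
  qed
  finally show ?case .
qed

lemma P_van_gen: "\<exists>N. \<forall>p>N. P p x = 0"
proof -
  obtain N where N: "\<forall>n\<ge>N. comp Hn n x = 0" using comp_bound by blast
  have "\<forall>p>N. P p x = 0"
  proof (intro allI impI)
    fix p assume p: "N < p"
    have "P p x = (\<Sum>n<N. P p (comp Hn n x))" by (rule lf_decomp[OF P_lf N])
    also have "\<dots> = 0" using p by (intro sum.neutral ballI P_van[OF comp_in]) auto
    finally show "P p x = 0" .
  qed
  then show ?thesis by blast
qed

lemma qpow_eq: assumes "\<forall>p>N. P p x = 0"
  shows "F h x = (\<Sum>p\<le>N. (h gchoose p) * P p x)"
proof -
  let ?t = "\<lambda>p. (h gchoose p) * P p x"
  have S: "{p. ?t p \<noteq> 0} \<subseteq> {..N}" using assms by (auto simp: not_le[symmetric])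
  have "F h x = (\<Sum>p\<in>{p. ?t p \<noteq> 0}. ?t p)" unfolding qpow_def Let_def by simp
  also have "\<dots> = (\<Sum>p\<le>N. ?t p)" by (rule sum.mono_neutral_left) (use S in auto)
  finally show ?thesis .
qed

lemma F_lf: "lf (F h)"
  unfolding lin_form_def
proof (intro conjI allI)
  fix x y
  obtain N1 where N1: "\<forall>p>N1. P p x = 0" using P_van_gen by blast
  obtain N2 where N2: "\<forall>p>N2. P p y = 0" using P_van_gen by blast
  let ?N = "max N1 N2"
  have a: "\<forall>p>?N. P p x = 0" "\<forall>p>?N. P p y = 0" using N1 N2 by auto
  have b: "\<forall>p>?N. P p (x + y) = 0" using a P_lf by (simp add: lin_form_def)
  show "F h (x + y) = F h x + F h y"
    unfolding qpow_eq[OF a(1)] qpow_eq[OF a(2)] qpow_eq[OF b]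
    using P_lf by (simp add: lin_form_def sum.distrib algebra_simps)
next
  fix c x
  obtain N1 where N1: "\<forall>p>N1. P p x = 0" using P_van_gen by blast
  have b: "\<forall>p>N1. P p (smult c x) = 0" using N1 P_lf by (simp add: lin_form_def)
  show "F h (smult c x) = c * F h x"
    unfolding qpow_eq[OF N1] qpow_eq[OF b]
    using P_lf by (simp add: lin_form_def sum_distrib_left algebra_simps)
qed

lemma F_hom: "x \<in> Hn k \<Longrightarrow> k \<le> N \<Longrightarrow> F h x = (\<Sum>p\<le>N. (h gchoose p) * P p x)"
  by (rule qpow_eq) (auto intro: P_van)

lemma P_add: "tev (P a) (P b) (cop x) = P (a + b) x"
proof (induction a arbitrary: x)
  case 0 then show ?case using counitL[OF P_lf] by simp
next
  case (Suc a)
  have "tev (P (Suc a)) (P b) (cop x) = tev (\<lambda>y. tev phi (P a) (cop y)) (P b) (cop x)"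
    by (simp add: conv_eq)
  also have "\<dots> = tev phi (\<lambda>z. tev (P a) (P b) (cop z)) (cop x)"
    by (rule coassoc[OF phi_lf P_lf P_lf])
  also have "\<dots> = tev phi (P (a + b)) (cop x)" using Suc.IH by simp
  finally show ?case by (simp add: conv_eq)
qed

lemma F_add_hom:
  assumes x: "x \<in> Hn n"
  shows "tev (F s) (F t) (cop x) = F (s + t) x"
proof -
  let ?g = "\<lambda>p r. (s gchoose p) * (t gchoose r) * P (p + r) x"
  have "tev (F s) (F t) (cop x) = (\<Sum>i\<le>n. tev (\<lambda>a. F s (comp Hn i a)) (\<lambda>b. F t (comp Hn (n - i) b)) (cop x))"
    by (rule cop_grade[OF x F_lf F_lf])
  also have "\<dots> = (\<Sum>i\<le>n. tev (\<lambda>a. \<Sum>p\<le>n. (s gchoose p) * P p (comp Hn i a))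
                               (\<lambda>b. \<Sum>r\<le>n. (t gchoose r) * P r (comp Hn (n - i) b)) (cop x))"
    by (intro sum.cong refl arg_cong2[where f="\<lambda>f g. tev f g (cop x)"] ext F_hom[OF comp_in]) auto
  also have "\<dots> = (\<Sum>i\<le>n. \<Sum>p\<le>n. \<Sum>r\<le>n. (s gchoose p) * (t gchoose r) *
        tev (\<lambda>a. P p (comp Hn i a)) (\<lambda>b. P r (comp Hn (n - i) b)) (cop x))"
    unfolding tev_sumL tev_sumR tev_scaleL tev_scaleR by (simp only: sum_distrib_left mult.assoc)
  also have "\<dots> = (\<Sum>p\<le>n. \<Sum>i\<le>n. \<Sum>r\<le>n. (s gchoose p) * (t gchoose r) *
        tev (\<lambda>a. P p (comp Hn i a)) (\<lambda>b. P r (comp Hn (n - i) b)) (cop x))"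
    by (rule sum.swap)
  also have "\<dots> = (\<Sum>p\<le>n. \<Sum>r\<le>n. \<Sum>i\<le>n. (s gchoose p) * (t gchoose r) *
        tev (\<lambda>a. P p (comp Hn i a)) (\<lambda>b. P r (comp Hn (n - i) b)) (cop x))"
    by (rule sum.cong[OF refl], rule sum.swap)
  also have "\<dots> = (\<Sum>p\<le>n. \<Sum>r\<le>n. (s gchoose p) * (t gchoose r) *
        (\<Sum>i\<le>n. tev (\<lambda>a. P p (comp Hn i a)) (\<lambda>b. P r (comp Hn (n - i) b)) (cop x)))"
    by (simp only: sum_distrib_left)
  also have "\<dots> = (\<Sum>p\<le>n. \<Sum>r\<le>n. ?g p r)"
    by (simp add: cop_grade[OF x P_lf P_lf, symmetric] P_add)
  also have "\<dots> = (\<Sum>(p, r)\<in>{..n} \<times> {..n}. ?g p r)"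
    by (simp add: sum.cartesian_product)
  also have "\<dots> = (\<Sum>(p, r)\<in>{(p, r). p + r \<le> n}. ?g p r)"
  proof (rule sum.mono_neutral_right)
    show "{(p, r). p + r \<le> n} \<subseteq> {..n} \<times> {..n}" by auto
    show "\<forall>i\<in>{..n} \<times> {..n} - {(p, r). p + r \<le> n}. (case i of (p, r) \<Rightarrow> ?g p r) = 0"
    proof (intro ballI)
      fix i assume "i \<in> {..n} \<times> {..n} - {(p, r). p + r \<le> n}"
      then obtain p r where pr: "i = (p, r)" "n < p + r" by auto
      then show "(case i of (p, r) \<Rightarrow> ?g p r) = 0" using P_van[OF x, of "p + r"] by simp
    qed
  qed auto
  also have "\<dots> = (\<Sum>k\<le>n. \<Sum>p\<le>k. ?g p (k - p))"
    by (rule sum.triangle_reindex_eq)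
  also have "\<dots> = (\<Sum>k\<le>n. ((s + t) gchoose k) * P k x)"
  proof (intro sum.cong refl)
    fix k assume "k \<in> {..n}"
    have "(\<Sum>p\<le>k. ?g p (k - p)) = (\<Sum>p\<le>k. (s gchoose p) * (t gchoose (k - p))) * P k x"
      by (simp add: sum_distrib_right)
    also have "\<dots> = ((s + t) gchoose k) * P k x"
      using gbinomial_Vandermonde[of s t k] by (simp add: atLeast0AtMost)
    finally show "(\<Sum>p\<le>k. ?g p (k - p)) = ((s + t) gchoose k) * P k x" .
  qed
  also have "\<dots> = F (s + t) x" by (rule F_hom[OF x, symmetric]) simp
  finally show ?thesis .
qed

lemma F_one: assumes x: "x \<in> Hn n" shows "F 1 x = q x"
proof -
  have "F 1 x = (\<Sum>p\<le>Suc n. (1 gchoose p) * P p x)" by (rule F_hom[OF x]) simp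
  also have "\<dots> = (\<Sum>p\<in>{0, 1}. (1 gchoose p) * P p x)"
  proof (rule sum.mono_neutral_right)
    show "\<forall>i\<in>{..Suc n} - {0, 1}. (1 gchoose i) * P i x = 0"
    proof
      fix i assume "i \<in> {..Suc n} - {0, 1}"
      then have "1 < i" by auto
      then have "(1::nat) choose i = 0" by simp
      then have "((of_nat 1 :: 'k) gchoose i) = 0" by (metis binomial_gbinomial of_nat_0)
      then show "(1 gchoose i) * P i x = 0" by simp
    qed
  qed auto
  also have "\<dots> = eps x + phi x" using counitR[OF phi_lf] by (simp add: conv_def)
  finally show ?thesis by simp
qed

lemma F_pow2: "x \<in> Hn n \<Longrightarrow> F (2 ^ j) x = (2 ^ j) ^ n * q x"
proof (induction j arbitrary: n x)
  case 0 then show ?case using F_one by simp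
next
  case (Suc j)
  let ?t = "(2::'k) ^ j"
  have "F (2 ^ Suc j) x = F (?t + ?t) x" by simp
  also have "\<dots> = tev (F ?t) (F ?t) (cop x)" by (rule F_add_hom[OF Suc.prems, symmetric])
  also have "\<dots> = (\<Sum>i\<le>n. tev (\<lambda>a. F ?t (comp Hn i a)) (\<lambda>b. F ?t (comp Hn (n - i) b)) (cop x))"
    by (rule cop_grade[OF Suc.prems F_lf F_lf])
  also have "\<dots> = (\<Sum>i\<le>n. tev (\<lambda>a. ?t ^ i * q (comp Hn i a)) (\<lambda>b. ?t ^ (n - i) * q (comp Hn (n - i) b)) (cop x))"
    by (intro sum.cong refl arg_cong2[where f="\<lambda>f g. tev f g (cop x)"] ext Suc.IH comp_in)
  also have "\<dots> = (\<Sum>i\<le>n. ?t ^ n * tev (\<lambda>a. q (comp Hn i a)) (\<lambda>b. q (comp Hn (n - i) b)) (cop x))"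
    by (intro sum.cong refl) (simp add: tev_scaleL tev_scaleR power_add[symmetric])
  also have "\<dots> = ?t ^ n * tev q q (cop x)"
    by (simp add: sum_distrib_left[symmetric] cop_grade[OF Suc.prems q_lf q_lf, symmetric])
  also have "\<dots> = (2 ^ Suc j) ^ n * q x" using QQ[OF Suc.prems] by (simp add: power_mult_distrib)
  finally show ?case .
qed

end



lemma inj_pow2: "inj (\<lambda>j::nat. (2::'k::field_char_0) ^ j)"
proof (rule injI)
  fix a b :: nat assume "(2::'k) ^ a = 2 ^ b"
  then have "(of_nat (2 ^ a) :: 'k) = of_nat (2 ^ b)" by simp
  then have "(2::nat) ^ a = 2 ^ b" using of_nat_eq_iff by blast
  then show "a = b" by simp
qed

context cghq begin

lemma F_poly: assumes x: "x \<in> Hn n" shows "F h x = h ^ n * q x"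
proof -
  define c where "c p = P p x / fact p" for p
  define Pp where "Pp = (\<Sum>p\<le>n. Polynomial.smult (c p) (\<Prod>i\<in>{0..<p}. [:- of_nat i, 1:])) - monom (q x) n"
  have ev: "poly Pp z = F z x - z ^ n * q x" for z
  proof -
    have "poly Pp z = (\<Sum>p\<le>n. c p * (\<Prod>i\<in>{0..<p}. z - of_nat i)) - q x * z ^ n"
      unfolding Pp_def by (simp add: poly_sum poly_prod poly_monom)
    also have "(\<Sum>p\<le>n. c p * (\<Prod>i\<in>{0..<p}. z - of_nat i)) = (\<Sum>p\<le>n. (z gchoose p) * P p x)"
    proof (intro sum.cong refl)
      fix p
      have "(z gchoose p) = (\<Prod>i\<in>{0..<p}. z - of_nat i) / fact p"
        using gbinomial_mult_fact'[of z p] by (simp add: field_simps)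
      then show "c p * (\<Prod>i\<in>{0..<p}. z - of_nat i) = (z gchoose p) * P p x"
        by (simp add: c_def)
    qed
    also have "\<dots> = F z x" by (rule F_hom[OF x, symmetric]) simp
    finally show ?thesis by (simp add: mult.commute)
  qed
  have "Pp = 0"
  proof (rule ccontr)
    assume "Pp \<noteq> 0"
    then have fin: "finite {z. poly Pp z = 0}" by (rule poly_roots_finite)
    have "range (\<lambda>j::nat. (2::'k) ^ j) \<subseteq> {z. poly Pp z = 0}"
      using ev F_pow2[OF x] by auto
    moreover have "infinite (range (\<lambda>j::nat. (2::'k) ^ j))"
      by (rule range_inj_infinite[OF inj_pow2])
    ultimately show False using fin finite_subset by blast
  qed
  then show ?thesis using ev[of h] by simp
qed

lemma F_char: "character smult mult one (F h)"
  unfolding character_def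
proof (intro conjI allI)
  show "lf (F h)" by (rule F_lf)
  show "F h one = 1" using F_poly[OF one_in] q_one by simp
  fix x y
  show "F h (mult x y) = F h x * F h y"
  proof (rule mult_ext[OF F_lf])
    fix m n x y assume xy: "x \<in> Hn m" "y \<in> Hn n"
    have "F h (mult x y) = h ^ (m + n) * q (mult x y)" by (rule F_poly[OF mult_grade[OF xy]])
    also have "\<dots> = (h ^ m * q x) * (h ^ n * q y)" by (simp add: q_mult power_add)
    also have "\<dots> = F h x * F h y" using F_poly[OF xy(1)] F_poly[OF xy(2)] by simp
    finally show "F h (mult x y) = F h x * F h y" .
  qed
qed

end

theorem mainTheorem1:
  fixes smult :: "'k::field_char_0 \<Rightarrow> 'h::ab_group_add \<Rightarrow> 'h"
    and mult :: "'h \<Rightarrow> 'h \<Rightarrow> 'h" and one :: 'h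
    and cop :: "'h \<Rightarrow> ('h \<times> 'h) list" and eps :: "'h \<Rightarrow> 'k"
    and Hn :: "nat \<Rightarrow> 'h set"
    and \<alpha> q :: "'h \<Rightarrow> 'k"
  assumes "conn_graded_hopf smult mult one cop eps Hn"
    and "\<exists>x\<in>Hn 1. \<alpha> x \<noteq> 0"
    and "inv_fact_char smult one cop Hn \<alpha> q"
  shows "(\<forall>x y. q (mult x y) = q x * q y) \<and>
         (\<forall>h. character smult mult one (qpow cop eps q h) \<and>
              (\<forall>n x. x \<in> Hn n \<longrightarrow> qpow cop eps q h x = h ^ n * q x))"
proof -
  interpret cghq smult mult one cop eps Hn \<alpha> q
    by (unfold_locales) (use assms in auto)
  show ?thesis using q_mult F_char F_poly by blast
qed



end
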